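(* Let $X$ be a Banach space, $(Y_j)_{j\in\varGamma}$ a family of closed subspaces of $X$, and $(P_j)_{j\in\varGamma}$ a family of bounded linear projections $P_j:X\to Y_j$ such that (1) $P_j[X]=Y_j$ for all $j\in\varGamma$; (2) $P_j\circ P_i(x)=0$ for all $x\in X$ whenever $i\neq j$; (3) the formula $x\mapsto (P_j(x))_{j\in\varGamma}$ defines a bounded injective linear operator from $X$ into $\left(\bigoplus_{j\in\varGamma}Y_j\right)_{c_0}$. Then $\left(\bigoplus_{j\in\varGamma}\mathcal{F}(Y_j)\right)_{\ell_1}\stackrel{c}{\hookrightarrow}\mathcal{F}(X)$.
   Context: For a pointed metric space $M$ (Banach spaces pointed at $0$), $\operatorname{Lip}_0(M)$ is the Banach space of real Lipschitz functions vanishing at the base point with the Lipschitz-constant norm, and the Lipschitz-free space $\mathcal{F}(M)$ is the closed linear span in $\operatorname{Lip}_0(M)^*$ of the evaluation functionals $\delta_x$, $x\in M$. $\left(\bigoplus_{j}Z_j\right)_{c_0}$ is the space of families $(z_j)$ with $z_j\in Z_j$ and $\|z_j\|\to0$ (for each $\epsilon>0$ only finitely many $\|z_j\|\ge\epsilon$), with sup norm; $\left(\bigoplus_j Z_j\right)_{\ell_1}$ is the space of families with $\sum_j\|z_j\|<\infty$ and that norm. $X\stackrel{c}{\hookrightarrow}Y$ means $Y$ contains a complemented subspace isomorphic to $X$. *)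

theory Defs
  imports "HOL-Analysis.Analysis"
begin

(* Functions are
   represented as real functions on the ambient type, required to vanish
   outside M (so each element of Lip_0(M) has a unique representative). *)
definition Lip0 :: "'a::metric_space set \<Rightarrow> 'a \<Rightarrow> ('a \<Rightarrow> real) set" where
  "Lip0 M p = {f. (\<exists>L. L-lipschitz_on M f) \<and> f p = 0 \<and> (\<forall>x. x \<notin> M \<longrightarrow> f x = 0)}"

definition lipconst :: "'a::metric_space set \<Rightarrow> ('a \<Rightarrow> real) \<Rightarrow> real" where
  "lipconst M f = Inf {L. L-lipschitz_on M f}"

definition Lip0_dual :: "'a::metric_space set \<Rightarrow> 'a \<Rightarrow> (('a \<Rightarrow> real) \<Rightarrow> real) set" where
  "Lip0_dual M p = {\<phi>.
     (\<forall>f. f \<notin> Lip0 M p \<longrightarrow> \<phi> f = 0) \<and>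
     (\<forall>f\<in>Lip0 M p. \<forall>g\<in>Lip0 M p. \<phi> (\<lambda>x. f x + g x) = \<phi> f + \<phi> g) \<and>
     (\<forall>c. \<forall>f\<in>Lip0 M p. \<phi> (\<lambda>x. c * f x) = c * \<phi> f) \<and>
     (\<exists>C. \<forall>f\<in>Lip0 M p. \<bar>\<phi> f\<bar> \<le> C * lipconst M f)}"

definition dualnorm :: "'a::metric_space set \<Rightarrow> 'a \<Rightarrow> (('a \<Rightarrow> real) \<Rightarrow> real) \<Rightarrow> real" where
  "dualnorm M p \<phi> = Sup {\<bar>\<phi> f\<bar> | f. f \<in> Lip0 M p \<and> lipconst M f \<le> 1}"

definition delta :: "'a::metric_space set \<Rightarrow> 'a \<Rightarrow> 'a \<Rightarrow> (('a \<Rightarrow> real) \<Rightarrow> real)" where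
  "delta M p x = (\<lambda>f. if f \<in> Lip0 M p then f x else 0)"

definition molecules :: "'a::metric_space set \<Rightarrow> 'a \<Rightarrow> (('a \<Rightarrow> real) \<Rightarrow> real) set" where
  "molecules M p = {\<phi>. \<exists>S a. finite S \<and> S \<subseteq> M \<and> \<phi> = (\<lambda>f. \<Sum>x\<in>S. a x * delta M p x f)}"

definition free_space :: "'a::metric_space set \<Rightarrow> 'a \<Rightarrow> (('a \<Rightarrow> real) \<Rightarrow> real) set" where
  "free_space M p = {\<phi>. \<phi> \<in> Lip0_dual M p \<and>
     (\<forall>\<epsilon>>0. \<exists>m\<in>molecules M p. dualnorm M p (\<lambda>f. \<phi> f - m f) < \<epsilon>)}"

definition fadd :: "('b \<Rightarrow> real) \<Rightarrow> ('b \<Rightarrow> real) \<Rightarrow> ('b \<Rightarrow> real)" where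
  "fadd \<phi> \<psi> = (\<lambda>f. \<phi> f + \<psi> f)"
definition fscale :: "real \<Rightarrow> ('b \<Rightarrow> real) \<Rightarrow> ('b \<Rightarrow> real)" where
  "fscale c \<phi> = (\<lambda>f. c * \<phi> f)"

definition l1_free_sum :: "'j set \<Rightarrow> ('j \<Rightarrow> 'a::real_normed_vector set) \<Rightarrow> ('j \<Rightarrow> ('a \<Rightarrow> real) \<Rightarrow> real) set" where
  "l1_free_sum \<Gamma> Y = {u. (\<forall>j\<in>\<Gamma>. u j \<in> free_space (Y j) 0) \<and> (\<forall>j. j \<notin> \<Gamma> \<longrightarrow> u j = (\<lambda>f. 0)) \<and>
      (\<lambda>j. dualnorm (Y j) 0 (u j)) summable_on \<Gamma>}"

definition l1_norm :: "'j set \<Rightarrow> ('j \<Rightarrow> 'a::real_normed_vector set) \<Rightarrow> ('j \<Rightarrow> ('a \<Rightarrow> real) \<Rightarrow> real) \<Rightarrow> real" where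
  "l1_norm \<Gamma> Y u = infsum (\<lambda>j. dualnorm (Y j) 0 (u j)) \<Gamma>"

definition ladd :: "('j \<Rightarrow> 'b \<Rightarrow> real) \<Rightarrow> ('j \<Rightarrow> 'b \<Rightarrow> real) \<Rightarrow> ('j \<Rightarrow> 'b \<Rightarrow> real)" where
  "ladd u v = (\<lambda>j. fadd (u j) (v j))"
definition lscale :: "real \<Rightarrow> ('j \<Rightarrow> 'b \<Rightarrow> real) \<Rightarrow> ('j \<Rightarrow> 'b \<Rightarrow> real)" where
  "lscale c u = (\<lambda>j. fscale c (u j))"

(* X c\<hookrightarrow> Y : Y (carrier V, norm NV) contains a complemented subspace isomorphic to
   X (carrier U, norm NU): T is a linear isomorphic embedding of U into V and Q is a
   bounded linear projection of V onto T[U]. *)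
definition compl_embeds ::
  "'u set \<Rightarrow> ('u \<Rightarrow> real) \<Rightarrow> ('u \<Rightarrow> 'u \<Rightarrow> 'u) \<Rightarrow> (real \<Rightarrow> 'u \<Rightarrow> 'u) \<Rightarrow>
   'v set \<Rightarrow> ('v \<Rightarrow> real) \<Rightarrow> ('v \<Rightarrow> 'v \<Rightarrow> 'v) \<Rightarrow> (real \<Rightarrow> 'v \<Rightarrow> 'v) \<Rightarrow> bool" where
  "compl_embeds U NU addU scU V NV addV scV \<longleftrightarrow>
    (\<exists>T Q.
      (\<forall>u\<in>U. T u \<in> V) \<and>
      (\<forall>u\<in>U. \<forall>u'\<in>U. T (addU u u') = addV (T u) (T u')) \<and>
      (\<forall>c. \<forall>u\<in>U. T (scU c u) = scV c (T u)) \<and>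
      (\<exists>c>0. \<exists>C. \<forall>u\<in>U. c * NU u \<le> NV (T u) \<and> NV (T u) \<le> C * NU u) \<and>
      (\<forall>v\<in>V. Q v \<in> T ` U) \<and>
      (\<forall>v\<in>V. \<forall>v'\<in>V. Q (addV v v') = addV (Q v) (Q v')) \<and>
      (\<forall>c. \<forall>v\<in>V. Q (scV c v) = scV c (Q v)) \<and>
      (\<exists>C. \<forall>v\<in>V. NV (Q v) \<le> C * NV v) \<and>
      (\<forall>u\<in>U. Q (T u) = T u))"

end

theory Submission
  imports Defs
begin

lemma lipconst_lip:
  assumes "L-lipschitz_on M f"
  shows "(lipconst M f)-lipschitz_on M f"
proof -
  let ?S = "{L. L-lipschitz_on M f}"
  have ne: "?S \<noteq> {}" using assms by blast
  have lb: "\<And>L. L \<in> ?S \<Longrightarrow> 0 \<le> L" by (auto dest: lipschitz_on_nonneg)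
  have nn: "0 \<le> lipconst M f" unfolding lipconst_def by (rule cInf_greatest[OF ne]) (use lb in auto)
  show ?thesis
  proof (rule lipschitz_onI[OF _ nn])
    fix x y assume xy: "x \<in> M" "y \<in> M"
    show "dist (f x) (f y) \<le> lipconst M f * dist x y"
    proof (cases "x = y")
      case True then show ?thesis by simp
    next
      case False
      then have dp: "dist x y > 0" by simp
      have "dist (f x) (f y) / dist x y \<le> lipconst M f"
        unfolding lipconst_def
      proof (rule cInf_greatest[OF ne])
        fix L assume "L \<in> ?S"
        then have "dist (f x) (f y) \<le> L * dist x y" using xy by (auto dest: lipschitz_onD)
        then show "dist (f x) (f y) / dist x y \<le> L" using dp by (simp add: divide_le_eq)
      qed
      then show ?thesis using dp by (simp add: divide_le_eq)
    qed
  qed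
qed

lemma lipconst_le:
  assumes "L-lipschitz_on M f"
  shows "lipconst M f \<le> L"
  unfolding lipconst_def
  by (rule cInf_lower) (use assms in \<open>auto intro!: bdd_belowI[of _ 0] dest: lipschitz_on_nonneg\<close>)

lemma lipconst_nonneg:
  assumes "L-lipschitz_on M f"
  shows "0 \<le> lipconst M f"
  using lipconst_lip[OF assms] lipschitz_on_nonneg by blast

lemma Lip0_lip: "f \<in> Lip0 M p \<Longrightarrow> (lipconst M f)-lipschitz_on M f"
  unfolding Lip0_def using lipconst_lip by blast

lemma Lip0_lipconst_nonneg: "f \<in> Lip0 M p \<Longrightarrow> 0 \<le> lipconst M f"
  using Lip0_lip lipschitz_on_nonneg by blast

lemma Lip0_zero: "(\<lambda>x. 0) \<in> Lip0 M p"
  unfolding Lip0_def using lipschitz_on_constant by blast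

lemma lipconst_zero: "lipconst M (\<lambda>x. 0) \<le> 0"
  by (rule lipconst_le) (rule lipschitz_on_constant)

lemma Lip0_add: "f \<in> Lip0 M p \<Longrightarrow> g \<in> Lip0 M p \<Longrightarrow> (\<lambda>x. f x + g x) \<in> Lip0 M p"
  unfolding Lip0_def using lipschitz_on_add by fastforce

lemma Lip0_cmult: "f \<in> Lip0 M p \<Longrightarrow> (\<lambda>x. c * f x) \<in> Lip0 M p"
  unfolding Lip0_def using lipschitz_on_cmult_real by fastforce

lemma Lip0_sum: "finite F \<Longrightarrow> (\<And>i. i \<in> F \<Longrightarrow> h i \<in> Lip0 M p) \<Longrightarrow> (\<lambda>x. \<Sum>i\<in>F. h i x) \<in> Lip0 M p"
proof (induction F rule: finite_induct)
  case empty then show ?case using Lip0_zero by simp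
next
  case (insert a F)
  then show ?case using Lip0_add[of "h a" M p "\<lambda>x. \<Sum>i\<in>F. h i x"] by simp
qed

lemma dual_add: "\<phi> \<in> Lip0_dual M p \<Longrightarrow> f \<in> Lip0 M p \<Longrightarrow> g \<in> Lip0 M p \<Longrightarrow> \<phi> (\<lambda>x. f x + g x) = \<phi> f + \<phi> g"
  unfolding Lip0_dual_def by blast

lemma dual_cmult: "\<phi> \<in> Lip0_dual M p \<Longrightarrow> f \<in> Lip0 M p \<Longrightarrow> \<phi> (\<lambda>x. c * f x) = c * \<phi> f"
  unfolding Lip0_dual_def by blast

lemma dual_out: "\<phi> \<in> Lip0_dual M p \<Longrightarrow> f \<notin> Lip0 M p \<Longrightarrow> \<phi> f = 0"
  unfolding Lip0_dual_def by blast

lemma dual_zero: "\<phi> \<in> Lip0_dual M p \<Longrightarrow> \<phi> (\<lambda>x. 0) = 0"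
  using dual_add[OF _ Lip0_zero Lip0_zero, of \<phi> M p] by simp

lemma dual_sum:
  assumes ph: "\<phi> \<in> Lip0_dual M p" and fin: "finite F" and hh: "\<And>i. i \<in> F \<Longrightarrow> h i \<in> Lip0 M p"
  shows "\<phi> (\<lambda>x. \<Sum>i\<in>F. h i x) = (\<Sum>i\<in>F. \<phi> (h i))"
  using fin hh
proof (induction F rule: finite_induct)
  case empty then show ?case using dual_zero[OF ph] by simp
next
  case (insert a F)
  have "\<phi> (\<lambda>x. \<Sum>i\<in>insert a F. h i x) = \<phi> (\<lambda>x. h a x + (\<Sum>i\<in>F. h i x))"
    using insert by simp
  also have "\<dots> = \<phi> (h a) + \<phi> (\<lambda>x. \<Sum>i\<in>F. h i x)"
    using dual_add[OF ph, of "h a" "\<lambda>x. \<Sum>i\<in>F. h i x"] insert Lip0_sum[of F h M p] by simp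
  finally show ?case using insert by simp
qed

lemma zero_in_set: "\<bar>\<phi> (\<lambda>x. 0)\<bar> \<in> {\<bar>\<phi> f\<bar> | f. f \<in> Lip0 M p \<and> lipconst M f \<le> 1}"
proof -
  have "lipconst M (\<lambda>x. 0) \<le> 1" using lipconst_zero[of M] by linarith
  then show ?thesis using Lip0_zero[of M p] by blast
qed

lemma dual_set_bdd:
  assumes "\<phi> \<in> Lip0_dual M p"
  shows "bdd_above {\<bar>\<phi> f\<bar> | f. f \<in> Lip0 M p \<and> lipconst M f \<le> 1}"
proof -
  obtain C where C: "\<forall>f\<in>Lip0 M p. \<bar>\<phi> f\<bar> \<le> C * lipconst M f" using assms unfolding Lip0_dual_def by blast
  show ?thesis
  proof (rule bdd_aboveI[of _ "\<bar>C\<bar>"])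
    fix s assume "s \<in> {\<bar>\<phi> f\<bar> | f. f \<in> Lip0 M p \<and> lipconst M f \<le> 1}"
    then obtain f where f: "f \<in> Lip0 M p" "lipconst M f \<le> 1" "s = \<bar>\<phi> f\<bar>" by blast
    have l0: "0 \<le> lipconst M f" using Lip0_lipconst_nonneg[OF f(1)] .
    have "C * lipconst M f \<le> \<bar>C\<bar> * lipconst M f" by (rule mult_right_mono[OF abs_ge_self l0])
    also have "\<dots> \<le> \<bar>C\<bar>" using f(2) by (simp add: mult_left_le)
    finally have "C * lipconst M f \<le> \<bar>C\<bar>" .
    then show "s \<le> \<bar>C\<bar>" using C f by force
  qed
qed

lemma dualnorm_nonneg:
  assumes "\<phi> \<in> Lip0_dual M p"
  shows "0 \<le> dualnorm M p \<phi>"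
proof -
  have "\<bar>\<phi> (\<lambda>x. 0)\<bar> \<in> {\<bar>\<phi> f\<bar> | f. f \<in> Lip0 M p \<and> lipconst M f \<le> 1}"
    by (rule zero_in_set)
  then have "\<bar>\<phi> (\<lambda>x. 0)\<bar> \<le> dualnorm M p \<phi>"
    unfolding dualnorm_def by (rule cSup_upper[OF _ dual_set_bdd[OF assms]])
  then show ?thesis by simp
qed

lemma dual_bound:
  assumes "\<phi> \<in> Lip0_dual M p" "f \<in> Lip0 M p"
  shows "\<bar>\<phi> f\<bar> \<le> dualnorm M p \<phi> * lipconst M f"
proof -
  obtain C where C: "\<forall>f\<in>Lip0 M p. \<bar>\<phi> f\<bar> \<le> C * lipconst M f" using assms unfolding Lip0_dual_def by blast
  define L where "L = lipconst M f"
  have L0: "0 \<le> L" using Lip0_lipconst_nonneg[OF assms(2)] L_def by simp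
  show ?thesis
  proof (cases "L = 0")
    case True
    then show ?thesis using C assms(2) L_def by force
  next
    case False
    then have Lp: "L > 0" using L0 by simp
    define g where "g = (\<lambda>x. (1/L) * f x)"
    have g: "g \<in> Lip0 M p" using Lip0_cmult[OF assms(2)] g_def by blast
    have "(\<bar>1/L\<bar> * L)-lipschitz_on M g"
      unfolding g_def by (rule lipschitz_on_cmult_real) (use Lip0_lip[OF assms(2)] L_def in simp)
    then have "1-lipschitz_on M g" using Lp by simp
    then have "lipconst M g \<le> 1" by (rule lipconst_le)
    then have "\<bar>\<phi> g\<bar> \<in> {\<bar>\<phi> f\<bar> | f. f \<in> Lip0 M p \<and> lipconst M f \<le> 1}" using g by blast
    then have "\<bar>\<phi> g\<bar> \<le> dualnorm M p \<phi>"
      unfolding dualnorm_def by (rule cSup_upper[OF _ dual_set_bdd[OF assms(1)]])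
    moreover have "\<phi> g = (1/L) * \<phi> f" unfolding g_def by (rule dual_cmult[OF assms])
    ultimately have "\<bar>\<phi> f\<bar> / L \<le> dualnorm M p \<phi>" using Lp by (simp add: abs_mult)
    then show ?thesis using Lp L_def by (simp add: divide_le_eq mult.commute)
  qed
qed

lemma dualnorm_le:
  assumes "\<And>f. f \<in> Lip0 M p \<Longrightarrow> \<bar>\<phi> f\<bar> \<le> B * lipconst M f" "0 \<le> B"
  shows "dualnorm M p \<phi> \<le> B"
  unfolding dualnorm_def
proof (rule cSup_least)
  show "{\<bar>\<phi> f\<bar> | f. f \<in> Lip0 M p \<and> lipconst M f \<le> 1} \<noteq> {}"
    using zero_in_set[of \<phi> M p] by blast
  fix s assume "s \<in> {\<bar>\<phi> f\<bar> | f. f \<in> Lip0 M p \<and> lipconst M f \<le> 1}"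
  then obtain f where f: "f \<in> Lip0 M p" "lipconst M f \<le> 1" "s = \<bar>\<phi> f\<bar>" by blast
  have "B * lipconst M f \<le> B" using f(2) assms(2) by (simp add: mult_left_le)
  then show "s \<le> B" using assms(1)[OF f(1)] f(3) by simp
qed

lemma dualnorm_approx:
  assumes "\<phi> \<in> Lip0_dual M p" "\<delta> > 0"
  shows "\<exists>g. g \<in> Lip0 M p \<and> lipconst M g \<le> 1 \<and> dualnorm M p \<phi> - \<delta> \<le> \<phi> g"
proof -
  let ?S = "{\<bar>\<phi> f\<bar> | f. f \<in> Lip0 M p \<and> lipconst M f \<le> 1}"
  have ne: "?S \<noteq> {}" using zero_in_set[of \<phi> M p] by blast
  have "dualnorm M p \<phi> - \<delta> < Sup ?S" using assms(2) unfolding dualnorm_def by simp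
  then obtain s where "s \<in> ?S" "dualnorm M p \<phi> - \<delta> < s" using less_cSupE[OF _ ne] by blast
  then obtain f where f: "f \<in> Lip0 M p" "lipconst M f \<le> 1" "dualnorm M p \<phi> - \<delta> < \<bar>\<phi> f\<bar>" by blast
  show ?thesis
  proof (cases "\<phi> f \<ge> 0")
    case True then show ?thesis using f by (intro exI[of _ f]) auto
  next
    case False
    define g where "g = (\<lambda>x. (-1) * f x)"
    have g: "g \<in> Lip0 M p" using Lip0_cmult[OF f(1)] g_def by blast
    have "(\<bar>-1\<bar> * lipconst M f)-lipschitz_on M g"
      unfolding g_def by (rule lipschitz_on_cmult_real) (use Lip0_lip[OF f(1)] in simp)
    then have "lipconst M g \<le> 1" using lipconst_le f(2) by fastforce
    moreover have "\<phi> g = - \<phi> f" unfolding g_def using dual_cmult[OF assms(1) f(1), of "-1"] by simp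
    ultimately show ?thesis using g f False by (intro exI[of _ g]) auto
  qed
qed

lemma dual_diff:
  assumes "\<phi> \<in> Lip0_dual M p" "\<psi> \<in> Lip0_dual M p"
  shows "(\<lambda>f. \<phi> f - \<psi> f) \<in> Lip0_dual M p"
proof -
  obtain C where C: "\<forall>f\<in>Lip0 M p. \<bar>\<phi> f\<bar> \<le> C * lipconst M f" using assms unfolding Lip0_dual_def by blast
  obtain D where D: "\<forall>f\<in>Lip0 M p. \<bar>\<psi> f\<bar> \<le> D * lipconst M f" using assms unfolding Lip0_dual_def by blast
  have "\<forall>f\<in>Lip0 M p. \<bar>\<phi> f - \<psi> f\<bar> \<le> (C + D) * lipconst M f"
  proof
    fix f assume "f \<in> Lip0 M p"
    then have "\<bar>\<phi> f\<bar> \<le> C * lipconst M f" "\<bar>\<psi> f\<bar> \<le> D * lipconst M f" using C D by auto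
    then show "\<bar>\<phi> f - \<psi> f\<bar> \<le> (C + D) * lipconst M f" by (simp add: algebra_simps)
  qed
  then have "\<exists>C. \<forall>f\<in>Lip0 M p. \<bar>\<phi> f - \<psi> f\<bar> \<le> C * lipconst M f" by blast
  moreover have "\<forall>f. f \<notin> Lip0 M p \<longrightarrow> \<phi> f - \<psi> f = 0"
    using dual_out[OF assms(1)] dual_out[OF assms(2)] by simp
  moreover have "\<forall>f\<in>Lip0 M p. \<forall>g\<in>Lip0 M p. \<phi> (\<lambda>x. f x + g x) - \<psi> (\<lambda>x. f x + g x) = (\<phi> f - \<psi> f) + (\<phi> g - \<psi> g)"
    using dual_add[OF assms(1)] dual_add[OF assms(2)] by simp
  moreover have "\<forall>c. \<forall>f\<in>Lip0 M p. \<phi> (\<lambda>x. c * f x) - \<psi> (\<lambda>x. c * f x) = c * (\<phi> f - \<psi> f)"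
    using dual_cmult[OF assms(1)] dual_cmult[OF assms(2)] by (simp add: right_diff_distrib)
  ultimately show ?thesis unfolding Lip0_dual_def by blast
qed

lemma molecule_dual:
  assumes "m \<in> molecules M p" "p \<in> M"
  shows "m \<in> Lip0_dual M p"
proof -
  obtain S a where S: "finite S" "S \<subseteq> M" "m = (\<lambda>f. \<Sum>x\<in>S. a x * delta M p x f)"
    using assms unfolding molecules_def by blast
  have b: "\<bar>m f\<bar> \<le> (\<Sum>x\<in>S. \<bar>a x\<bar> * dist x p) * lipconst M f" if f: "f \<in> Lip0 M p" for f
  proof -
    have "\<bar>m f\<bar> \<le> (\<Sum>x\<in>S. \<bar>a x * f x\<bar>)" using S f by (simp add: delta_def sum_abs)
    also have "\<dots> \<le> (\<Sum>x\<in>S. \<bar>a x\<bar> * dist x p * lipconst M f)"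
    proof (rule sum_mono)
      fix x assume x: "x \<in> S"
      have "dist (f x) (f p) \<le> lipconst M f * dist x p"
        using lipschitz_onD[OF Lip0_lip[OF f]] x S assms(2) by blast
      then have "\<bar>f x\<bar> \<le> lipconst M f * dist x p" using f unfolding Lip0_def by (simp add: dist_real_def)
      from mult_left_mono[OF this abs_ge_zero[of "a x"]]
      show "\<bar>a x * f x\<bar> \<le> \<bar>a x\<bar> * dist x p * lipconst M f"
        by (simp add: abs_mult algebra_simps)
    qed
    also have "\<dots> = (\<Sum>x\<in>S. \<bar>a x\<bar> * dist x p) * lipconst M f" by (simp add: sum_distrib_right)
    finally show ?thesis .
  qed
  have out: "\<forall>f. f \<notin> Lip0 M p \<longrightarrow> m f = 0" using S by (simp add: delta_def)
  have add: "\<forall>f\<in>Lip0 M p. \<forall>g\<in>Lip0 M p. m (\<lambda>x. f x + g x) = m f + m g"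
  proof (intro ballI)
    fix f g assume fg: "f \<in> Lip0 M p" "g \<in> Lip0 M p"
    then have "(\<lambda>x. f x + g x) \<in> Lip0 M p" by (rule Lip0_add)
    then show "m (\<lambda>x. f x + g x) = m f + m g" using S fg by (simp add: delta_def sum.distrib algebra_simps)
  qed
  have sc: "\<forall>c. \<forall>f\<in>Lip0 M p. m (\<lambda>x. c * f x) = c * m f"
  proof (intro allI ballI)
    fix c f assume fg: "f \<in> Lip0 M p"
    then have "(\<lambda>x. c * f x) \<in> Lip0 M p" by (rule Lip0_cmult)
    then show "m (\<lambda>x. c * f x) = c * m f" using S fg by (simp add: delta_def sum_distrib_left algebra_simps)
  qed
  have bd: "\<exists>C. \<forall>f\<in>Lip0 M p. \<bar>m f\<bar> \<le> C * lipconst M f" using b by blast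
  show ?thesis unfolding Lip0_dual_def mem_Collect_eq using out add sc bd by (intro conjI)
qed

lemma lip_max0:
  fixes h :: "'a::metric_space \<Rightarrow> real"
  assumes "L-lipschitz_on U h"
  shows "L-lipschitz_on U (\<lambda>x. max 0 (h x))"
proof (rule lipschitz_onI)
  show "0 \<le> L" using lipschitz_on_nonneg[OF assms] .
  fix x y assume "x \<in> U" "y \<in> U"
  then have "dist (h x) (h y) \<le> L * dist x y" using lipschitz_onD[OF assms] by blast
  moreover have "\<bar>max 0 (h x) - max 0 (h y)\<bar> \<le> \<bar>h x - h y\<bar>"
    by (cases "h x \<ge> 0"; cases "h y \<ge> 0") auto
  ultimately show "dist (max 0 (h x)) (max 0 (h y)) \<le> L * dist x y"
    by (simp add: dist_real_def)
qed

lemma prodlip: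
  fixes a b n :: "'a::metric_space \<Rightarrow> real"
  assumes an: "\<And>x. \<bar>a x\<bar> \<le> L * n x" and bn: "\<And>x. 0 \<le> b x \<and> b x \<le> n x"
    and la: "La-lipschitz_on UNIV a" and lb: "Lb-lipschitz_on UNIV b" and ln: "Lc-lipschitz_on UNIV n"
    and L0: "0 \<le> L"
  shows "(La + L * (Lb + Lc))-lipschitz_on UNIV (\<lambda>x. a x * b x / n x)"
proof (rule lipschitz_onI)
  have La0: "0 \<le> La" "0 \<le> Lb" "0 \<le> Lc" using la lb ln lipschitz_on_nonneg by blast+
  then show "0 \<le> La + L * (Lb + Lc)" using L0 by simp
  have n0: "0 \<le> n x" for x using bn[of x] by linarith
  have psi: "0 \<le> b x / n x \<and> b x / n x \<le> 1" for x
    using bn[of x] n0[of x] by (cases "n x = 0") (auto simp: divide_le_eq)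
  have key: "\<bar>a x * b x / n x - a y * b y / n y\<bar> \<le> (La + L * (Lb + Lc)) * dist x y"
    if nx: "n x = 0" for x y
  proof -
    have ax: "a x = 0" using an[of x] nx L0 by simp
    have "\<bar>a x * b x / n x - a y * b y / n y\<bar> = \<bar>a y\<bar> * (b y / n y)"
      using nx psi[of y] bn[of y] n0[of y] by (simp add: abs_mult)
    also have "\<dots> \<le> \<bar>a y\<bar>" by (rule mult_left_le) (use psi[of y] in auto)
    also have "\<dots> = dist (a y) (a x)" using ax by (simp add: dist_real_def)
    also have "\<dots> \<le> La * dist y x" using lipschitz_onD[OF la] by blast
    also have "\<dots> \<le> (La + L * (Lb + Lc)) * dist x y"
      using La0 L0 by (simp add: dist_commute mult_right_mono)
    finally show ?thesis .
  qed
  fix x y :: 'a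
  show "dist (a x * b x / n x) (a y * b y / n y) \<le> (La + L * (Lb + Lc)) * dist x y"
  proof (cases "n x = 0 \<or> n y = 0")
    case True
    then show ?thesis using key[of x y] key[of y x] by (auto simp: dist_real_def dist_commute abs_minus_commute)
  next
    case False
    then have nxp: "n x > 0" and nyp: "n y > 0" using n0 by (auto simp: less_le)
    define px where "px = b x / n x"
    define py where "py = b y / n y"
    have pxy: "0 \<le> py" "py \<le> 1" using psi[of y] py_def by auto
    have e1: "a x * b x / n x - a y * b y / n y = a x * (px - py) + (a x - a y) * py"
      by (simp add: px_def py_def algebra_simps diff_divide_distrib)
    have e2: "n x * (px - py) = (b x - b y) + py * (n y - n x)"
      using nxp nyp by (simp add: px_def py_def field_simps)
    have db: "\<bar>b x - b y\<bar> \<le> Lb * dist x y" using lipschitz_onD[OF lb] by (simp add: dist_real_def)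
    have dn: "\<bar>n y - n x\<bar> \<le> Lc * dist x y" using lipschitz_onD[OF ln] by (simp add: dist_real_def abs_minus_commute)
    have da: "\<bar>a x - a y\<bar> \<le> La * dist x y" using lipschitz_onD[OF la] by (simp add: dist_real_def)
    have "\<bar>py * (n y - n x)\<bar> \<le> \<bar>n y - n x\<bar>" using pxy by (simp add: abs_mult mult_left_le_one_le)
    then have t1: "\<bar>n x * (px - py)\<bar> \<le> (Lb + Lc) * dist x y" using e2 db dn
      by (simp add: algebra_simps)
    have "\<bar>a x * (px - py)\<bar> = \<bar>a x\<bar> * \<bar>px - py\<bar>" by (simp add: abs_mult)
    also have "\<dots> \<le> L * n x * \<bar>px - py\<bar>" using an[of x] by (simp add: mult_right_mono)
    also have "\<dots> = L * \<bar>n x * (px - py)\<bar>" using nxp by (simp add: abs_mult)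
    also have "\<dots> \<le> L * ((Lb + Lc) * dist x y)" using t1 L0 by (simp add: mult_left_mono)
    finally have t2: "\<bar>a x * (px - py)\<bar> \<le> L * ((Lb + Lc) * dist x y)" .
    have "\<bar>(a x - a y) * py\<bar> \<le> \<bar>a x - a y\<bar>" using pxy by (simp add: abs_mult mult_left_le)
    then have t3: "\<bar>(a x - a y) * py\<bar> \<le> La * dist x y" using da by linarith
    have "\<bar>a x * b x / n x - a y * b y / n y\<bar> \<le> \<bar>a x * (px - py)\<bar> + \<bar>(a x - a y) * py\<bar>"
      unfolding e1 by (rule abs_triangle_ineq)
    also have "\<dots> \<le> (La + L * (Lb + Lc)) * dist x y" using t2 t3 by (simp add: algebra_simps)
    finally show ?thesis by (simp add: dist_real_def)
  qed
qed

locale setting =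
  fixes \<Gamma> :: "'j set" and Y :: "'j \<Rightarrow> 'a::banach set" and P :: "'j \<Rightarrow> 'a \<Rightarrow> 'a"
  assumes closed_sub: "\<And>j. j \<in> \<Gamma> \<Longrightarrow> closed (Y j) \<and> subspace (Y j)"
    and bl: "\<And>j. j \<in> \<Gamma> \<Longrightarrow> bounded_linear (P j)"
    and proj: "\<And>j x. j \<in> \<Gamma> \<Longrightarrow> P j (P j x) = P j x"
    and range: "\<And>j. j \<in> \<Gamma> \<Longrightarrow> range (P j) = Y j"
    and orth: "\<And>i j x. i \<in> \<Gamma> \<Longrightarrow> j \<in> \<Gamma> \<Longrightarrow> i \<noteq> j \<Longrightarrow> P j (P i x) = 0"
    and bdd: "\<exists>C. \<forall>x. \<forall>j\<in>\<Gamma>. norm (P j x) \<le> C * norm x"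
    and inj: "\<And>x. (\<forall>j\<in>\<Gamma>. P j x = 0) \<Longrightarrow> x = 0"
begin

definition K where "K = max 1 (SOME C. \<forall>x. \<forall>j\<in>\<Gamma>. norm (P j x) \<le> C * norm x)"

lemma K1: "1 \<le> K" unfolding K_def by simp

lemma PK: "j \<in> \<Gamma> \<Longrightarrow> norm (P j x) \<le> K * norm x"
proof -
  assume j: "j \<in> \<Gamma>"
  define C where "C = (SOME C. \<forall>x. \<forall>j\<in>\<Gamma>. norm (P j x) \<le> C * norm x)"
  have "\<forall>x. \<forall>j\<in>\<Gamma>. norm (P j x) \<le> C * norm x" unfolding C_def by (rule someI_ex[OF bdd])
  then have "norm (P j x) \<le> C * norm x" using j by blast
  also have "\<dots> \<le> K * norm x" unfolding K_def C_def[symmetric] by (rule mult_right_mono) auto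
  finally show ?thesis .
qed

lemma Pdiff: "j \<in> \<Gamma> \<Longrightarrow> P j x - P j y = P j (x - y)"
  using linear_diff[OF bounded_linear.linear[OF bl]] by metis

lemma P0: "j \<in> \<Gamma> \<Longrightarrow> P j 0 = 0"
  using linear_0[OF bounded_linear.linear[OF bl]] by metis

lemma Plip: "j \<in> \<Gamma> \<Longrightarrow> norm (P j x - P j y) \<le> K * dist x y"
  using PK[of j "x - y"] Pdiff[of j x y] by (simp add: dist_norm)

lemma PinY: "j \<in> \<Gamma> \<Longrightarrow> P j x \<in> Y j"
  using range by blast

lemma zeroY: "j \<in> \<Gamma> \<Longrightarrow> 0 \<in> Y j"
  using closed_sub subspace_0 by blast

lemma PY: "j \<in> \<Gamma> \<Longrightarrow> y \<in> Y j \<Longrightarrow> P j y = y"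
  using range proj by (metis rangeE)

lemma PYo: "i \<in> \<Gamma> \<Longrightarrow> j \<in> \<Gamma> \<Longrightarrow> i \<noteq> j \<Longrightarrow> y \<in> Y i \<Longrightarrow> P j y = 0"
  using range orth by (metis rangeE)

definition supn :: "'j set \<Rightarrow> 'a \<Rightarrow> real" where
  "supn A x = Sup (insert 0 ((\<lambda>i. norm (P i x)) ` A))"

lemma supn_bdd: "A \<subseteq> \<Gamma> \<Longrightarrow> bdd_above (insert 0 ((\<lambda>i. norm (P i x)) ` A))"
  by (rule bdd_aboveI[of _ "K * norm x"]) (use PK K1 in \<open>auto\<close>)

lemma supn_upper: "A \<subseteq> \<Gamma> \<Longrightarrow> i \<in> A \<Longrightarrow> norm (P i x) \<le> supn A x"
  unfolding supn_def by (rule cSup_upper[OF _ supn_bdd]) auto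

lemma supn_nonneg: "A \<subseteq> \<Gamma> \<Longrightarrow> 0 \<le> supn A x"
  unfolding supn_def by (rule cSup_upper[OF _ supn_bdd]) auto

lemma supn_le: "A \<subseteq> \<Gamma> \<Longrightarrow> supn A x \<le> supn A y + K * dist x y"
proof -
  assume A: "A \<subseteq> \<Gamma>"
  show ?thesis unfolding supn_def[of A x]
  proof (rule cSup_least)
    show "insert 0 ((\<lambda>i. norm (P i x)) ` A) \<noteq> {}" by simp
    fix s assume "s \<in> insert 0 ((\<lambda>i. norm (P i x)) ` A)"
    then consider "s = 0" | i where "i \<in> A" "s = norm (P i x)" by blast
    then show "s \<le> supn A y + K * dist x y"
    proof cases
      case 1 then show ?thesis using supn_nonneg[OF A, of y] K1 by simp
    next
      case 2
      have "norm (P i x) \<le> norm (P i y) + norm (P i x - P i y)" by (rule norm_triangle_sub)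
      also have "\<dots> \<le> supn A y + K * dist x y"
        using supn_upper[OF A 2(1), of y] Plip[of i x y] 2 A by auto
      finally show ?thesis using 2 by simp
    qed
  qed
qed

lemma supn_lip: "A \<subseteq> \<Gamma> \<Longrightarrow> K-lipschitz_on UNIV (supn A)"
proof (rule lipschitz_onI)
  fix x y assume A: "A \<subseteq> \<Gamma>"
  have "supn A x \<le> supn A y + K * dist x y" "supn A y \<le> supn A x + K * dist x y"
    using supn_le[OF A, of x y] supn_le[OF A, of y x] by (auto simp: dist_commute)
  then show "dist (supn A x) (supn A y) \<le> K * dist x y" by (simp add: dist_real_def abs_le_iff)
next
  show "0 \<le> K" using K1 by simp
qed

definition nrm where "nrm = supn \<Gamma>"
definition mx where "mx j = supn (\<Gamma> - {j})"
definition D where "D j x = max 0 (norm (P j x) - mx j x)"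
definition E where "E j g = (\<lambda>x. g (P j x) * D j x / nrm x)"

lemma nrm_nonneg: "0 \<le> nrm x" unfolding nrm_def by (rule supn_nonneg) simp

lemma nrm_zero: "nrm x = 0 \<Longrightarrow> x = 0"
proof -
  assume "nrm x = 0"
  then have "\<forall>j\<in>\<Gamma>. P j x = 0" using supn_upper[of \<Gamma>] unfolding nrm_def
    by (metis norm_le_zero_iff order_refl)
  then show "x = 0" by (rule inj)
qed

lemma D_nonneg: "0 \<le> D j x" unfolding D_def by simp

lemma D_le: "j \<in> \<Gamma> \<Longrightarrow> D j x \<le> nrm x"
  unfolding D_def nrm_def mx_def
  using supn_upper[of \<Gamma> j x] supn_nonneg[of \<Gamma> x] supn_nonneg[of "\<Gamma> - {j}" x] by auto

lemma D_lip: "j \<in> \<Gamma> \<Longrightarrow> (2*K)-lipschitz_on UNIV (D j)"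
proof -
  assume j: "j \<in> \<Gamma>"
  have "K-lipschitz_on UNIV (\<lambda>x. norm (P j x))"
    by (rule lipschitz_onI) (use Plip[OF j] K1 in \<open>auto simp: dist_real_def intro: order_trans[OF norm_triangle_ineq3]\<close>)
  moreover have "K-lipschitz_on UNIV (mx j)" unfolding mx_def by (rule supn_lip) auto
  ultimately have "(K + K)-lipschitz_on UNIV (\<lambda>x. norm (P j x) - mx j x)" by (rule lipschitz_on_diff)
  then have "(K + K)-lipschitz_on UNIV (D j)" unfolding D_def[abs_def] by (rule lip_max0)
  then show ?thesis by simp
qed

lemma D_unique: "i \<in> \<Gamma> \<Longrightarrow> j \<in> \<Gamma> \<Longrightarrow> D i x > 0 \<Longrightarrow> D j x > 0 \<Longrightarrow> i = j"
proof (rule ccontr)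
  assume ij: "i \<in> \<Gamma>" "j \<in> \<Gamma>" "D i x > 0" "D j x > 0" "i \<noteq> j"
  have "norm (P i x) > mx i x" "norm (P j x) > mx j x" using ij(3,4) unfolding D_def by auto
  moreover have "norm (P j x) \<le> mx i x" "norm (P i x) \<le> mx j x"
    unfolding mx_def using ij by (auto intro!: supn_upper)
  ultimately show False by linarith
qed

lemma nrm_Y: "j \<in> \<Gamma> \<Longrightarrow> y \<in> Y j \<Longrightarrow> nrm y = norm y \<and> D j y = norm y"
proof -
  assume j: "j \<in> \<Gamma>" and y: "y \<in> Y j"
  have o: "\<And>i. i \<in> \<Gamma> \<Longrightarrow> i \<noteq> j \<Longrightarrow> norm (P i y) = 0" using PYo[OF j] y by auto
  have "(\<lambda>i. norm (P i y)) ` (\<Gamma> - {j}) \<subseteq> {0}" using o by auto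
  then have m: "mx j y = 0" unfolding mx_def supn_def
    by (metis (no_types, lifting) cSup_singleton insert_absorb2 subset_singletonD insert_absorb empty_iff insertI1)
  have "\<forall>i\<in>\<Gamma>. norm (P i y) = 0 \<or> norm (P i y) = norm y" using o PY[OF j y] by metis
  then have "(\<lambda>i. norm (P i y)) ` \<Gamma> \<subseteq> {0, norm y}" by blast
  moreover have "norm y \<in> (\<lambda>i. norm (P i y)) ` \<Gamma>" using PY[OF j y] j by (metis image_eqI)
  ultimately have "insert 0 ((\<lambda>i. norm (P i y)) ` \<Gamma>) = {0, norm y}" by blast
  moreover have "Sup {0, norm y} = norm y" by (rule cSup_eq_maximum) auto
  ultimately have "nrm y = norm y" unfolding nrm_def supn_def by simp
  then show ?thesis using m PY[OF j y] unfolding D_def by simp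
qed

end

context setting
begin

lemma Lip0_g0: "g \<in> Lip0 M p \<Longrightarrow> g p = 0" unfolding Lip0_def by blast

lemma E_lip:
  assumes j: "j \<in> \<Gamma>" and g: "g \<in> Lip0 (Y j) 0"
  shows "(4 * K * lipconst (Y j) g)-lipschitz_on UNIV (E j g)"
proof -
  define L where "L = lipconst (Y j) g"
  have gl: "L-lipschitz_on (Y j) g" using Lip0_lip[OF g] L_def by simp
  have L0: "0 \<le> L" using lipschitz_on_nonneg[OF gl] .
  have g0: "g 0 = 0" using Lip0_g0[OF g] .
  have an: "\<bar>g (P j x)\<bar> \<le> L * nrm x" for x
  proof -
    have "dist (g (P j x)) (g 0) \<le> L * dist (P j x) 0"
      using lipschitz_onD[OF gl PinY[OF j] zeroY[OF j]] .
    then have "\<bar>g (P j x)\<bar> \<le> L * norm (P j x)" using g0 by (simp add: dist_real_def)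
    also have "\<dots> \<le> L * nrm x" unfolding nrm_def using supn_upper[of \<Gamma> j x] j L0 by (simp add: mult_left_mono)
    finally show ?thesis .
  qed
  have la: "(L * K)-lipschitz_on UNIV (\<lambda>x. g (P j x))"
  proof (rule lipschitz_onI)
    fix x y :: 'a
    have "dist (g (P j x)) (g (P j y)) \<le> L * dist (P j x) (P j y)"
      using lipschitz_onD[OF gl PinY[OF j] PinY[OF j]] .
    also have "\<dots> \<le> L * (K * dist x y)" using Plip[OF j, of x y] L0 by (simp add: dist_norm mult_left_mono)
    finally show "dist (g (P j x)) (g (P j y)) \<le> L * K * dist x y" by simp
  next
    show "0 \<le> L * K" using L0 K1 by simp
  qed
  have bn: "0 \<le> D j x \<and> D j x \<le> nrm x" for x using D_nonneg D_le[OF j] by blast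
  have ln: "K-lipschitz_on UNIV nrm" unfolding nrm_def by (rule supn_lip) simp
  have "(L * K + L * (2 * K + K))-lipschitz_on UNIV (\<lambda>x. g (P j x) * D j x / nrm x)"
    by (rule prodlip[OF an bn la D_lip[OF j] ln L0])
  then show ?thesis unfolding E_def L_def[symmetric] by (simp add: algebra_simps)
qed

lemma E_Lip0:
  assumes j: "j \<in> \<Gamma>" and g: "g \<in> Lip0 (Y j) 0"
  shows "E j g \<in> Lip0 UNIV 0" "lipconst UNIV (E j g) \<le> 4 * K * lipconst (Y j) g"
proof -
  show "E j g \<in> Lip0 UNIV 0" unfolding Lip0_def using E_lip[OF assms]
    by (auto simp: E_def P0[OF j] Lip0_g0[OF g])
  show "lipconst UNIV (E j g) \<le> 4 * K * lipconst (Y j) g" by (rule lipconst_le[OF E_lip[OF assms]])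
qed

lemma E_add: "E j (\<lambda>x. g x + h x) = (\<lambda>x. E j g x + E j h x)"
  unfolding E_def by (simp add: add_divide_distrib ring_distribs)

lemma E_cmult: "E j (\<lambda>x. c * g x) = (\<lambda>x. c * E j g x)"
  unfolding E_def by (simp add: algebra_simps)

lemma E_Y: "j \<in> \<Gamma> \<Longrightarrow> y \<in> Y j \<Longrightarrow> g \<in> Lip0 (Y j) 0 \<Longrightarrow> E j g y = g y"
  using nrm_Y[of j y] PY[of j y] Lip0_g0[of g "Y j" 0]
  by (cases "y = 0") (auto simp: E_def)

lemma E_Yo: "i \<in> \<Gamma> \<Longrightarrow> j \<in> \<Gamma> \<Longrightarrow> i \<noteq> j \<Longrightarrow> y \<in> Y i \<Longrightarrow> g 0 = 0 \<Longrightarrow> E j g y = 0"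
  using PYo[of i j y] by (simp add: E_def)

lemma E_D0: "D j x = 0 \<Longrightarrow> E j g x = 0"
  by (simp add: E_def)

lemma card_pos_D:
  assumes "finite F" "F \<subseteq> \<Gamma>" shows "card {j\<in>F. D j x > 0} \<le> 1"
proof -
  have f: "finite {j\<in>F. D j x > 0}" using assms by auto
  have "\<forall>a\<in>{j\<in>F. D j x > 0}. \<forall>b\<in>{j\<in>F. D j x > 0}. a = b"
    using D_unique assms(2) by blast
  then have "card {j\<in>F. D j x > 0} \<le> Suc 0" using card_le_Suc0_iff_eq[OF f] by blast
  then show ?thesis by simp
qed

lemma E_sum_lip:
  assumes fin: "finite F" and F: "F \<subseteq> \<Gamma>"
    and g: "\<And>j. j \<in> F \<Longrightarrow> g j \<in> Lip0 (Y j) 0 \<and> lipconst (Y j) (g j) \<le> 1"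
  shows "(8 * K)-lipschitz_on UNIV (\<lambda>x. \<Sum>j\<in>F. E j (g j) x)"
proof (rule lipschitz_onI)
  show "0 \<le> 8 * K" using K1 by simp
  have each: "(4 * K)-lipschitz_on UNIV (E j (g j))" if j: "j \<in> F" for j
  proof (rule lipschitz_on_le[OF E_lip])
    show "j \<in> \<Gamma>" using j F by auto
    show "g j \<in> Lip0 (Y j) 0" using g[OF j] by blast
    show "4 * K * lipconst (Y j) (g j) \<le> 4 * K" using g[OF j] K1 by simp
  qed
  fix x y :: 'a
  define A where "A = {j\<in>F. D j x > 0} \<union> {j\<in>F. D j y > 0}"
  have AF: "A \<subseteq> F" unfolding A_def by auto
  have finA: "finite A" using AF fin finite_subset by blast
  have cA: "card A \<le> 2"
  proof -
    have "card A \<le> card {j\<in>F. D j x > 0} + card {j\<in>F. D j y > 0}" unfolding A_def by (rule card_Un_le)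
    then show ?thesis using card_pos_D[OF fin F, of x] card_pos_D[OF fin F, of y] by linarith
  qed
  have "(\<Sum>j\<in>F. E j (g j) x) - (\<Sum>j\<in>F. E j (g j) y) = (\<Sum>j\<in>F. E j (g j) x - E j (g j) y)"
    by (simp add: sum_subtractf)
  also have "\<dots> = (\<Sum>j\<in>A. E j (g j) x - E j (g j) y)"
  proof (rule sum.mono_neutral_right[OF fin AF])
    show "\<forall>i\<in>F - A. E i (g i) x - E i (g i) y = 0"
    proof
      fix i assume "i \<in> F - A"
      then have "D i x = 0" "D i y = 0" unfolding A_def using D_nonneg[of i x] D_nonneg[of i y] by auto
      then show "E i (g i) x - E i (g i) y = 0" by (simp add: E_D0)
    qed
  qed
  finally have eq: "(\<Sum>j\<in>F. E j (g j) x) - (\<Sum>j\<in>F. E j (g j) y) = (\<Sum>j\<in>A. E j (g j) x - E j (g j) y)" .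
  have "\<bar>\<Sum>j\<in>A. E j (g j) x - E j (g j) y\<bar> \<le> (\<Sum>j\<in>A. \<bar>E j (g j) x - E j (g j) y\<bar>)" by (rule sum_abs)
  also have "\<dots> \<le> (\<Sum>j\<in>A. 4 * K * dist x y)"
  proof (rule sum_mono)
    fix j assume "j \<in> A"
    then have "j \<in> F" using AF by auto
    from lipschitz_onD[OF each[OF this], of x y]
    show "\<bar>E j (g j) x - E j (g j) y\<bar> \<le> 4 * K * dist x y" by (simp add: dist_real_def)
  qed
  also have "\<dots> = real (card A) * (4 * K * dist x y)" by simp
  also have "\<dots> \<le> 2 * (4 * K * dist x y)"
    by (rule mult_right_mono) (use cA K1 in auto)
  finally show "dist (\<Sum>j\<in>F. E j (g j) x) (\<Sum>j\<in>F. E j (g j) y) \<le> 8 * K * dist x y"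
    using eq by (simp add: dist_real_def)
qed

end

context setting
begin

definition R :: "'j \<Rightarrow> ('a \<Rightarrow> real) \<Rightarrow> 'a \<Rightarrow> real" where "R j f = (\<lambda>x. if x \<in> Y j then f x else 0)"

lemma R_Lip0:
  assumes j: "j \<in> \<Gamma>" and f: "f \<in> Lip0 UNIV 0"
  shows "R j f \<in> Lip0 (Y j) 0" "lipconst (Y j) (R j f) \<le> lipconst UNIV f"
proof -
  have "(lipconst UNIV f)-lipschitz_on (Y j) (R j f)"
  proof (rule lipschitz_onI)
    fix x y assume "x \<in> Y j" "y \<in> Y j"
    then show "dist (R j f x) (R j f y) \<le> lipconst UNIV f * dist x y"
      using lipschitz_onD[OF Lip0_lip[OF f]] by (simp add: R_def)
  next
    show "0 \<le> lipconst UNIV f" using Lip0_lipconst_nonneg[OF f] .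
  qed
  then show "R j f \<in> Lip0 (Y j) 0" "lipconst (Y j) (R j f) \<le> lipconst UNIV f"
    using zeroY[OF j] Lip0_g0[OF f] by (auto simp: Lip0_def R_def intro: lipconst_le)
qed

lemma R_add: "R j (\<lambda>x. f x + g x) = (\<lambda>x. R j f x + R j g x)" by (rule ext) (simp add: R_def)
lemma R_cmult: "R j (\<lambda>x. c * f x) = (\<lambda>x. c * R j f x)" by (rule ext) (simp add: R_def)

abbreviation "U \<equiv> l1_free_sum \<Gamma> Y"

lemma U_dual: "u \<in> U \<Longrightarrow> j \<in> \<Gamma> \<Longrightarrow> u j \<in> Lip0_dual (Y j) 0"
  unfolding l1_free_sum_def free_space_def by blast

lemma U_free: "u \<in> U \<Longrightarrow> j \<in> \<Gamma> \<Longrightarrow> u j \<in> free_space (Y j) 0"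
  unfolding l1_free_sum_def by blast

lemma U_out: "u \<in> U \<Longrightarrow> j \<notin> \<Gamma> \<Longrightarrow> u j = (\<lambda>f. 0)"
  unfolding l1_free_sum_def by blast

lemma U_summable: "u \<in> U \<Longrightarrow> (\<lambda>j. dualnorm (Y j) 0 (u j)) summable_on \<Gamma>"
  unfolding l1_free_sum_def by blast

lemma U_norm_nonneg: "u \<in> U \<Longrightarrow> 0 \<le> l1_norm \<Gamma> Y u"
  unfolding l1_norm_def by (rule infsum_nonneg) (use dualnorm_nonneg U_dual in blast)

definition Tm where
  "Tm u = (\<lambda>f. if f \<in> Lip0 UNIV 0 then infsum (\<lambda>j. u j (R j f)) \<Gamma> else 0)"

lemma T_term_bound:
  assumes u: "u \<in> U" and f: "f \<in> Lip0 UNIV 0" and j: "j \<in> \<Gamma>"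
  shows "\<bar>u j (R j f)\<bar> \<le> lipconst UNIV f * dualnorm (Y j) 0 (u j)"
proof -
  have "\<bar>u j (R j f)\<bar> \<le> dualnorm (Y j) 0 (u j) * lipconst (Y j) (R j f)"
    by (rule dual_bound[OF U_dual[OF u j] R_Lip0(1)[OF j f]])
  also have "\<dots> \<le> dualnorm (Y j) 0 (u j) * lipconst UNIV f"
    by (rule mult_left_mono[OF R_Lip0(2)[OF j f] dualnorm_nonneg[OF U_dual[OF u j]]])
  finally show ?thesis by (simp add: mult.commute)
qed

lemma T_summable:
  assumes u: "u \<in> U" and f: "f \<in> Lip0 UNIV 0"
  shows "(\<lambda>j. u j (R j f)) summable_on \<Gamma>" "(\<lambda>j. \<bar>u j (R j f)\<bar>) summable_on \<Gamma>"
proof -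
  have s: "(\<lambda>j. lipconst UNIV f * dualnorm (Y j) 0 (u j)) summable_on \<Gamma>"
    by (rule summable_on_cmult_right[OF U_summable[OF u]])
  show a: "(\<lambda>j. \<bar>u j (R j f)\<bar>) summable_on \<Gamma>"
    by (rule summable_on_comparison_test[OF s]) (use T_term_bound[OF u f] in auto)
  then show "(\<lambda>j. u j (R j f)) summable_on \<Gamma>"
    using summable_on_iff_abs_summable_on_real[of "\<lambda>j. u j (R j f)" \<Gamma>] by (simp add: real_norm_def)
qed

lemma T_bound:
  assumes u: "u \<in> U" and f: "f \<in> Lip0 UNIV 0"
  shows "\<bar>Tm u f\<bar> \<le> l1_norm \<Gamma> Y u * lipconst UNIV f"
proof -
  have "\<bar>Tm u f\<bar> = norm (infsum (\<lambda>j. u j (R j f)) \<Gamma>)" using f by (simp add: Tm_def)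
  also have "\<dots> \<le> infsum (\<lambda>j. norm (u j (R j f))) \<Gamma>"
    by (rule norm_infsum_bound) (use T_summable(2)[OF u f] in simp)
  also have "\<dots> \<le> infsum (\<lambda>j. lipconst UNIV f * dualnorm (Y j) 0 (u j)) \<Gamma>"
    by (rule infsum_mono) (use T_summable(2)[OF u f] summable_on_cmult_right[OF U_summable[OF u]]
          T_term_bound[OF u f] in auto)
  also have "\<dots> = lipconst UNIV f * l1_norm \<Gamma> Y u"
    unfolding l1_norm_def by (rule infsum_cmult_right') 
  finally show ?thesis by (simp add: mult.commute)
qed

lemma T_dual:
  assumes u: "u \<in> U"
  shows "Tm u \<in> Lip0_dual UNIV 0"
proof -
  have out: "\<forall>f. f \<notin> Lip0 UNIV 0 \<longrightarrow> Tm u f = 0" by (simp add: Tm_def)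
  have add: "\<forall>f\<in>Lip0 UNIV 0. \<forall>g\<in>Lip0 UNIV 0. Tm u (\<lambda>x. f x + g x) = Tm u f + Tm u g"
  proof (intro ballI)
    fix f g :: "'a \<Rightarrow> real" assume f: "f \<in> Lip0 UNIV 0" and g: "g \<in> Lip0 UNIV 0"
    have fg: "(\<lambda>x. f x + g x) \<in> Lip0 UNIV 0" by (rule Lip0_add[OF f g])
    have "infsum (\<lambda>j. u j (R j (\<lambda>x. f x + g x))) \<Gamma> = infsum (\<lambda>j. u j (R j f) + u j (R j g)) \<Gamma>"
      by (rule infsum_cong) (simp add: R_add dual_add[OF U_dual[OF u] R_Lip0(1)[OF _ f] R_Lip0(1)[OF _ g]])
    also have "\<dots> = infsum (\<lambda>j. u j (R j f)) \<Gamma> + infsum (\<lambda>j. u j (R j g)) \<Gamma>"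
      by (rule infsum_add[OF T_summable(1)[OF u f] T_summable(1)[OF u g]])
    finally show "Tm u (\<lambda>x. f x + g x) = Tm u f + Tm u g" using f g fg by (simp add: Tm_def)
  qed
  have sc: "\<forall>c. \<forall>f\<in>Lip0 UNIV 0. Tm u (\<lambda>x. c * f x) = c * Tm u f"
  proof (intro allI ballI)
    fix c and f :: "'a \<Rightarrow> real" assume f: "f \<in> Lip0 UNIV 0"
    have cf: "(\<lambda>x. c * f x) \<in> Lip0 UNIV 0" by (rule Lip0_cmult[OF f])
    have "infsum (\<lambda>j. u j (R j (\<lambda>x. c * f x))) \<Gamma> = infsum (\<lambda>j. c * u j (R j f)) \<Gamma>"
      by (rule infsum_cong) (simp add: R_cmult dual_cmult[OF U_dual[OF u] R_Lip0(1)[OF _ f]])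
    also have "\<dots> = c * infsum (\<lambda>j. u j (R j f)) \<Gamma>" by (rule infsum_cmult_right')
    finally show "Tm u (\<lambda>x. c * f x) = c * Tm u f" using f cf by (simp add: Tm_def)
  qed
  have bd: "\<exists>C. \<forall>f\<in>Lip0 UNIV 0. \<bar>Tm u f\<bar> \<le> C * lipconst UNIV f" using T_bound[OF u] by blast
  show ?thesis unfolding Lip0_dual_def mem_Collect_eq using out add sc bd by (intro conjI)
qed

lemma T_norm: "u \<in> U \<Longrightarrow> dualnorm UNIV 0 (Tm u) \<le> l1_norm \<Gamma> Y u"
  by (rule dualnorm_le[OF T_bound U_norm_nonneg])

lemma U_ladd: "u \<in> U \<Longrightarrow> u' \<in> U \<Longrightarrow> j \<in> \<Gamma> \<Longrightarrow> g \<in> Lip0 (Y j) 0 \<Longrightarrow> ladd u u' j g = u j g + u' j g"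
  by (simp add: ladd_def fadd_def)

lemma T_add:
  assumes u: "u \<in> U" and u': "u' \<in> U"
  shows "Tm (ladd u u') = fadd (Tm u) (Tm u')"
proof
  fix f
  show "Tm (ladd u u') f = fadd (Tm u) (Tm u') f"
  proof (cases "f \<in> Lip0 UNIV 0")
    case True
    have "infsum (\<lambda>j. ladd u u' j (R j f)) \<Gamma> = infsum (\<lambda>j. u j (R j f) + u' j (R j f)) \<Gamma>"
      by (simp add: ladd_def fadd_def)
    also have "\<dots> = infsum (\<lambda>j. u j (R j f)) \<Gamma> + infsum (\<lambda>j. u' j (R j f)) \<Gamma>"
      by (rule infsum_add[OF T_summable(1)[OF u True] T_summable(1)[OF u' True]])
    finally show ?thesis using True by (simp add: Tm_def fadd_def)
  next
    case False then show ?thesis by (simp add: Tm_def fadd_def)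
  qed
qed

lemma T_scale: "Tm (lscale c u) = fscale c (Tm u)"
proof
  fix f
  show "Tm (lscale c u) f = fscale c (Tm u) f"
    by (cases "f \<in> Lip0 UNIV 0") (simp_all add: Tm_def fscale_def lscale_def infsum_cmult_right')
qed

end

context setting
begin

definition Qm :: "(('a \<Rightarrow> real) \<Rightarrow> real) \<Rightarrow> 'j \<Rightarrow> ('a \<Rightarrow> real) \<Rightarrow> real" where
  "Qm v = (\<lambda>j. if j \<in> \<Gamma> then (\<lambda>g. if g \<in> Lip0 (Y j) 0 then v (E j g) else 0) else (\<lambda>g. 0))"

lemma Qm_bound:
  assumes v: "v \<in> Lip0_dual UNIV 0" and j: "j \<in> \<Gamma>" and g: "g \<in> Lip0 (Y j) 0"
  shows "\<bar>Qm v j g\<bar> \<le> (4 * K * dualnorm UNIV 0 v) * lipconst (Y j) g"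
proof -
  have "\<bar>Qm v j g\<bar> = \<bar>v (E j g)\<bar>" using j g by (simp add: Qm_def)
  also have "\<dots> \<le> dualnorm UNIV 0 v * lipconst UNIV (E j g)" by (rule dual_bound[OF v E_Lip0(1)[OF j g]])
  also have "\<dots> \<le> dualnorm UNIV 0 v * (4 * K * lipconst (Y j) g)"
    by (rule mult_left_mono[OF E_Lip0(2)[OF j g] dualnorm_nonneg[OF v]])
  finally show ?thesis by (simp add: algebra_simps)
qed

lemma Qm_dual:
  assumes v: "v \<in> Lip0_dual UNIV 0" and j: "j \<in> \<Gamma>"
  shows "Qm v j \<in> Lip0_dual (Y j) 0"
proof -
  have out: "\<forall>f. f \<notin> Lip0 (Y j) 0 \<longrightarrow> Qm v j f = 0" using j by (simp add: Qm_def)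
  have add: "\<forall>f\<in>Lip0 (Y j) 0. \<forall>g\<in>Lip0 (Y j) 0. Qm v j (\<lambda>x. f x + g x) = Qm v j f + Qm v j g"
  proof (intro ballI)
    fix f g :: "'a \<Rightarrow> real" assume f: "f \<in> Lip0 (Y j) 0" and g: "g \<in> Lip0 (Y j) 0"
    have fg: "(\<lambda>x. f x + g x) \<in> Lip0 (Y j) 0" by (rule Lip0_add[OF f g])
    show "Qm v j (\<lambda>x. f x + g x) = Qm v j f + Qm v j g"
      using f g fg j by (simp add: Qm_def E_add dual_add[OF v E_Lip0(1)[OF j f] E_Lip0(1)[OF j g]])
  qed
  have sc: "\<forall>c. \<forall>f\<in>Lip0 (Y j) 0. Qm v j (\<lambda>x. c * f x) = c * Qm v j f"
  proof (intro allI ballI)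
    fix c and f :: "'a \<Rightarrow> real" assume f: "f \<in> Lip0 (Y j) 0"
    have cf: "(\<lambda>x. c * f x) \<in> Lip0 (Y j) 0" by (rule Lip0_cmult[OF f])
    show "Qm v j (\<lambda>x. c * f x) = c * Qm v j f"
      using f cf j by (simp add: Qm_def E_cmult dual_cmult[OF v E_Lip0(1)[OF j f]])
  qed
  have bd: "\<exists>C. \<forall>f\<in>Lip0 (Y j) 0. \<bar>Qm v j f\<bar> \<le> C * lipconst (Y j) f" using Qm_bound[OF v j] by blast
  show ?thesis unfolding Lip0_dual_def mem_Collect_eq using out add sc bd by (intro conjI)
qed

lemma Qm_sum:
  assumes v: "v \<in> Lip0_dual UNIV 0" and fin: "finite F" and F: "F \<subseteq> \<Gamma>"
  shows "(\<Sum>j\<in>F. dualnorm (Y j) 0 (Qm v j)) \<le> 8 * K * dualnorm UNIV 0 v"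
proof (rule field_le_epsilon)
  fix e :: real assume e: "0 < e"
  define \<delta> where "\<delta> = e / (real (card F) + 1)"
  have dp: "\<delta> > 0" using e by (simp add: \<delta>_def)
  have cd: "real (card F) * \<delta> \<le> e" using e by (simp add: \<delta>_def field_simps)
  have "\<forall>j\<in>F. \<exists>g. g \<in> Lip0 (Y j) 0 \<and> lipconst (Y j) g \<le> 1 \<and> dualnorm (Y j) 0 (Qm v j) - \<delta> \<le> Qm v j g"
    using dualnorm_approx[OF Qm_dual[OF v] dp] F by blast
  then obtain g where g: "\<And>j. j \<in> F \<Longrightarrow> g j \<in> Lip0 (Y j) 0 \<and> lipconst (Y j) (g j) \<le> 1 \<and>
      dualnorm (Y j) 0 (Qm v j) - \<delta> \<le> Qm v j (g j)"
    by metis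
  define H where "H = (\<lambda>x. \<Sum>j\<in>F. E j (g j) x)"
  have HL: "H \<in> Lip0 UNIV 0" unfolding H_def
    by (rule Lip0_sum[OF fin]) (use E_Lip0(1) g F in blast)
  have g': "\<And>j. j \<in> F \<Longrightarrow> g j \<in> Lip0 (Y j) 0 \<and> lipconst (Y j) (g j) \<le> 1" using g by blast
  have Hl: "lipconst UNIV H \<le> 8 * K" unfolding H_def by (rule lipconst_le[OF E_sum_lip[OF fin F g']])
  have "(\<Sum>j\<in>F. dualnorm (Y j) 0 (Qm v j)) \<le> (\<Sum>j\<in>F. Qm v j (g j) + \<delta>)"
    by (rule sum_mono) (use g in force)
  also have "\<dots> = (\<Sum>j\<in>F. v (E j (g j))) + real (card F) * \<delta>"
    using F g by (simp add: sum.distrib Qm_def subset_iff)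
  also have "(\<Sum>j\<in>F. v (E j (g j))) = v H"
    unfolding H_def by (rule dual_sum[OF v fin, symmetric]) (use E_Lip0(1) g F in blast)
  also have "v H \<le> dualnorm UNIV 0 v * lipconst UNIV H" using dual_bound[OF v HL] by linarith
  also have "\<dots> \<le> dualnorm UNIV 0 v * (8 * K)" by (rule mult_left_mono[OF Hl dualnorm_nonneg[OF v]])
  finally show "(\<Sum>j\<in>F. dualnorm (Y j) 0 (Qm v j)) \<le> 8 * K * dualnorm UNIV 0 v + e"
    using cd by (simp add: algebra_simps)
qed

lemma Qm_summable:
  assumes v: "v \<in> Lip0_dual UNIV 0"
  shows "(\<lambda>j. dualnorm (Y j) 0 (Qm v j)) summable_on \<Gamma>"
    "infsum (\<lambda>j. dualnorm (Y j) 0 (Qm v j)) \<Gamma> \<le> 8 * K * dualnorm UNIV 0 v"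
proof -
  show s: "(\<lambda>j. dualnorm (Y j) 0 (Qm v j)) summable_on \<Gamma>"
    by (rule nonneg_bdd_above_summable_on)
       (use dualnorm_nonneg[OF Qm_dual[OF v]] Qm_sum[OF v] in \<open>auto intro!: bdd_aboveI2[of _ _ "8 * K * dualnorm UNIV 0 v"]\<close>)
  show "infsum (\<lambda>j. dualnorm (Y j) 0 (Qm v j)) \<Gamma> \<le> 8 * K * dualnorm UNIV 0 v"
    by (rule infsum_le_finite_sums[OF s]) (use Qm_sum[OF v] in auto)
qed

lemma Qm_add: "Qm (fadd v v') = ladd (Qm v) (Qm v')"
  by (intro ext) (simp add: Qm_def ladd_def fadd_def)

lemma Qm_scale: "Qm (fscale c v) = lscale c (Qm v)"
  by (intro ext) (simp add: Qm_def lscale_def fscale_def)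

lemma R_E:
  assumes i: "i \<in> \<Gamma>" and j: "j \<in> \<Gamma>" and g: "g \<in> Lip0 (Y j) 0"
  shows "R i (E j g) = (if i = j then g else (\<lambda>x. 0))"
proof (rule ext)
  fix x
  show "R i (E j g) x = (if i = j then g else (\<lambda>x. 0)) x"
  proof (cases "i = j")
    case True
    then show ?thesis using E_Y[OF j _ g, of x] g unfolding Lip0_def by (auto simp: R_def)
  next
    case False
    then show ?thesis using E_Yo[OF i j False, of x g] Lip0_g0[OF g] by (auto simp: R_def)
  qed
qed

lemma QT:
  assumes u: "u \<in> U"
  shows "Qm (Tm u) = u"
proof (intro ext)
  fix j g
  show "Qm (Tm u) j g = u j g"
  proof (cases "j \<in> \<Gamma>")
    case False then show ?thesis using U_out[OF u False] by (simp add: Qm_def)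
  next
    case j: True
    show ?thesis
    proof (cases "g \<in> Lip0 (Y j) 0")
      case False then show ?thesis using j dual_out[OF U_dual[OF u j] False] by (simp add: Qm_def)
    next
      case g: True
      have "infsum (\<lambda>i. u i (R i (E j g))) \<Gamma> = infsum (\<lambda>i. u i (R i (E j g))) {j}"
      proof (rule infsum_cong_neutral)
        fix i assume "i \<in> \<Gamma> - {j}"
        then show "u i (R i (E j g)) = 0" using R_E[of i j g] j g dual_zero[OF U_dual[OF u]] by auto
      qed (use j in auto)
      also have "\<dots> = u j g" using R_E[OF j j g] by simp
      finally show ?thesis using j g E_Lip0(1)[OF j g] by (simp add: Qm_def Tm_def)
    qed
  qed
qed

end

context setting
begin

lemma free_dual: "v \<in> free_space M p \<Longrightarrow> v \<in> Lip0_dual M p"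
  unfolding free_space_def by blast

lemma Qm_free:
  assumes v: "v \<in> free_space UNIV 0" and j: "j \<in> \<Gamma>"
  shows "Qm v j \<in> free_space (Y j) 0"
proof -
  have vd: "v \<in> Lip0_dual UNIV 0" using free_dual[OF v] .
  have "\<exists>m'\<in>molecules (Y j) 0. dualnorm (Y j) 0 (\<lambda>g. Qm v j g - m' g) < \<epsilon>" if e: "\<epsilon> > 0" for \<epsilon>
  proof -
    have e': "\<epsilon> / (4 * K) > 0" using e K1 by simp
    obtain m where m: "m \<in> molecules UNIV 0" and dm: "dualnorm UNIV 0 (\<lambda>f. v f - m f) < \<epsilon> / (4 * K)"
      using v e' unfolding free_space_def by blast
    obtain S a where S: "finite S" "m = (\<lambda>f. \<Sum>x\<in>S. a x * delta UNIV 0 x f)"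
      using m unfolding molecules_def by blast
    have md: "m \<in> Lip0_dual UNIV 0" by (rule molecule_dual[OF m]) simp
    have vm: "(\<lambda>f. v f - m f) \<in> Lip0_dual UNIV 0" by (rule dual_diff[OF vd md])
    define b where "b y = (\<Sum>x\<in>{x. x \<in> S \<and> P j x = y}. a x * (D j x / nrm x))" for y
    define m' where "m' = (\<lambda>g. \<Sum>y\<in>P j ` S. b y * delta (Y j) 0 y g)"
    have m'm: "m' \<in> molecules (Y j) 0" unfolding molecules_def m'_def
      using S(1) PinY[OF j] by blast
    have eq: "(\<lambda>g. Qm v j g - m' g) = Qm (\<lambda>f. v f - m f) j"
    proof (rule ext)
      fix g
      show "Qm v j g - m' g = Qm (\<lambda>f. v f - m f) j g"
      proof (cases "g \<in> Lip0 (Y j) 0")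
        case False then show ?thesis using j by (simp add: Qm_def m'_def delta_def)
      next
        case True
        have "m' g = (\<Sum>y\<in>P j ` S. b y * g y)" using True by (simp add: m'_def delta_def)
        also have "\<dots> = (\<Sum>y\<in>P j ` S. \<Sum>x\<in>{x. x \<in> S \<and> P j x = y}. a x * (D j x / nrm x) * g (P j x))"
          unfolding b_def by (rule sum.cong) (auto simp: sum_distrib_right)
        also have "\<dots> = (\<Sum>x\<in>S. a x * (D j x / nrm x) * g (P j x))"
          by (rule sum.image_gen[OF S(1), symmetric])
        also have "\<dots> = m (E j g)" using S E_Lip0(1)[OF j True] by (simp add: delta_def E_def algebra_simps)
        finally show ?thesis using True j by (simp add: Qm_def)
      qed
    qed
    have "dualnorm (Y j) 0 (Qm (\<lambda>f. v f - m f) j) \<le> 4 * K * dualnorm UNIV 0 (\<lambda>f. v f - m f)"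
      by (rule dualnorm_le[OF Qm_bound[OF vm j]]) (assumption, rule mult_nonneg_nonneg, use K1 in simp, rule dualnorm_nonneg[OF vm])
    also have "\<dots> < 4 * K * (\<epsilon> / (4 * K))" by (rule mult_strict_left_mono[OF dm]) (use K1 in simp)
    also have "\<dots> = \<epsilon>" using K1 by simp
    finally have d: "dualnorm (Y j) 0 (Qm (\<lambda>f. v f - m f) j) < \<epsilon>" .
    show ?thesis by (rule bexI[OF _ m'm]) (simp only: eq d)
  qed
  then show ?thesis unfolding free_space_def using Qm_dual[OF vd j] by blast
qed

lemma Qm_U: "v \<in> free_space UNIV 0 \<Longrightarrow> Qm v \<in> U"
  unfolding l1_free_sum_def using Qm_free Qm_summable(1)[OF free_dual] by (auto simp: Qm_def)

lemma Qm_norm: "v \<in> free_space UNIV 0 \<Longrightarrow> l1_norm \<Gamma> Y (Qm v) \<le> 8 * K * dualnorm UNIV 0 v"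
  unfolding l1_norm_def using Qm_summable(2)[OF free_dual] .

end

context setting
begin

lemma T_free:
  assumes u: "u \<in> U"
  shows "Tm u \<in> free_space UNIV 0"
proof -
  have Td: "Tm u \<in> Lip0_dual UNIV 0" by (rule T_dual[OF u])
  define d where "d j = dualnorm (Y j) 0 (u j)" for j
  have ds: "d summable_on \<Gamma>" unfolding d_def[abs_def] by (rule U_summable[OF u])
  have d0: "\<And>j. j \<in> \<Gamma> \<Longrightarrow> 0 \<le> d j" unfolding d_def using dualnorm_nonneg U_dual[OF u] by blast
  have "\<exists>m\<in>molecules UNIV 0. dualnorm UNIV 0 (\<lambda>f. Tm u f - m f) < \<epsilon>" if e: "\<epsilon> > 0" for \<epsilon>
  proof -
    obtain F where F: "finite F" "F \<subseteq> \<Gamma>" and Fd: "dist (sum d F) (infsum d \<Gamma>) \<le> \<epsilon> / 3"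
      using infsum_finite_approximation[OF ds, of "\<epsilon>/3"] e by auto
    have dsF: "d summable_on (\<Gamma> - F)" by (rule summable_on_subset_banach[OF ds]) auto
    have "infsum d \<Gamma> = infsum d (F \<union> (\<Gamma> - F))" using F by (simp add: Un_absorb1)
    also have "\<dots> = infsum d F + infsum d (\<Gamma> - F)"
      by (rule infsum_Un_disjoint) (use F dsF in auto)
    finally have tail: "infsum d (\<Gamma> - F) \<le> \<epsilon> / 3" using Fd F by (simp add: dist_real_def)
    define \<eta> where "\<eta> = \<epsilon> / (3 * (real (card F) + 1))"
    have \<eta>: "\<eta> > 0" using e by (simp add: \<eta>_def)
    have c\<eta>: "real (card F) * \<eta> \<le> \<epsilon> / 3" using e by (simp add: \<eta>_def field_simps)
    have "\<forall>j\<in>F. \<exists>S a. finite S \<and> S \<subseteq> Y j \<and>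
       dualnorm (Y j) 0 (\<lambda>g. u j g - (\<Sum>x\<in>S. a x * delta (Y j) 0 x g)) < \<eta>"
    proof
      fix j assume "j \<in> F"
      then have j: "j \<in> \<Gamma>" using F by auto
      obtain m where m: "m \<in> molecules (Y j) 0" and dm: "dualnorm (Y j) 0 (\<lambda>g. u j g - m g) < \<eta>"
        using U_free[OF u j] \<eta> unfolding free_space_def by blast
      obtain S a where S: "finite S" "S \<subseteq> Y j" "m = (\<lambda>g. \<Sum>x\<in>S. a x * delta (Y j) 0 x g)"
        using m unfolding molecules_def by blast
      show "\<exists>S a. finite S \<and> S \<subseteq> Y j \<and>
       dualnorm (Y j) 0 (\<lambda>g. u j g - (\<Sum>x\<in>S. a x * delta (Y j) 0 x g)) < \<eta>"
        by (rule exI[of _ S], rule exI[of _ a]) (use S dm in simp)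
    qed
    then have "\<exists>S. \<forall>j\<in>F. \<exists>a. finite (S j) \<and> S j \<subseteq> Y j \<and>
       dualnorm (Y j) 0 (\<lambda>g. u j g - (\<Sum>x\<in>S j. a x * delta (Y j) 0 x g)) < \<eta>"
      by (rule bchoice)
    then obtain S where "\<forall>j\<in>F. \<exists>a. finite (S j) \<and> S j \<subseteq> Y j \<and>
       dualnorm (Y j) 0 (\<lambda>g. u j g - (\<Sum>x\<in>S j. a x * delta (Y j) 0 x g)) < \<eta>"
      by blast
    then have "\<exists>a. \<forall>j\<in>F. finite (S j) \<and> S j \<subseteq> Y j \<and>
       dualnorm (Y j) 0 (\<lambda>g. u j g - (\<Sum>x\<in>S j. a j x * delta (Y j) 0 x g)) < \<eta>"
      by (rule bchoice)
    then obtain a where Sa': "\<forall>j\<in>F. finite (S j) \<and> S j \<subseteq> Y j \<and>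
       dualnorm (Y j) 0 (\<lambda>g. u j g - (\<Sum>x\<in>S j. a j x * delta (Y j) 0 x g)) < \<eta>"
      by blast
    have Sa: "\<And>j. j \<in> F \<Longrightarrow> finite (S j) \<and> S j \<subseteq> Y j \<and>
       dualnorm (Y j) 0 (\<lambda>g. u j g - (\<Sum>x\<in>S j. a j x * delta (Y j) 0 x g)) < \<eta>"
      using Sa' by blast
    define mj where "mj j = (\<lambda>g. \<Sum>x\<in>S j. a j x * delta (Y j) 0 x g)" for j
    define SS where "SS = (\<Union>j\<in>F. S j)"
    define c where "c x = (\<Sum>j\<in>F. if x \<in> S j then a j x else 0)" for x
    define m where "m = (\<lambda>f. \<Sum>x\<in>SS. c x * delta UNIV 0 x f)"
    have finSS: "finite SS" unfolding SS_def using F Sa by auto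
    have mm: "m \<in> molecules UNIV 0" unfolding molecules_def m_def using finSS by blast
    have mjd: "mj j \<in> Lip0_dual (Y j) 0" if "j \<in> F" for j
      unfolding mj_def by (rule molecule_dual) (use that F Sa zeroY in \<open>auto simp: molecules_def\<close>)
    have mf: "m f = (\<Sum>j\<in>F. mj j (R j f))" if f: "f \<in> Lip0 UNIV 0" for f
    proof -
      have "m f = (\<Sum>x\<in>SS. c x * f x)" using f by (simp add: m_def delta_def)
      also have "\<dots> = (\<Sum>x\<in>SS. \<Sum>j\<in>F. (if x \<in> S j then a j x * f x else 0))"
        unfolding c_def sum_distrib_right by (intro sum.cong refl) simp
      also have "\<dots> = (\<Sum>j\<in>F. \<Sum>x\<in>SS. (if x \<in> S j then a j x * f x else 0))" by (rule sum.swap)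
      also have "\<dots> = (\<Sum>j\<in>F. \<Sum>x\<in>S j. a j x * f x)"
      proof (rule sum.cong[OF refl])
        fix j assume j: "j \<in> F"
        have "S j \<subseteq> SS" using j unfolding SS_def by auto
        then have "SS \<inter> S j = S j" by auto
        then show "(\<Sum>x\<in>SS. (if x \<in> S j then a j x * f x else 0)) = (\<Sum>x\<in>S j. a j x * f x)"
          using sum.inter_restrict[OF finSS, of "\<lambda>x. a j x * f x" "S j"] by simp
      qed
      also have "\<dots> = (\<Sum>j\<in>F. mj j (R j f))"
      proof (rule sum.cong[OF refl])
        fix j assume j: "j \<in> F"
        then have jG: "j \<in> \<Gamma>" using F by auto
        show "(\<Sum>x\<in>S j. a j x * f x) = mj j (R j f)"
          unfolding mj_def using R_Lip0(1)[OF jG f] Sa[OF j] by (auto simp: delta_def R_def intro!: sum.cong)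
      qed
      finally show ?thesis .
    qed
    have bound: "\<bar>Tm u f - m f\<bar> \<le> (2 * \<epsilon> / 3) * lipconst UNIV f" if f: "f \<in> Lip0 UNIV 0" for f
    proof -
      define h where "h j = u j (R j f)" for j
      have hs: "h summable_on \<Gamma>" unfolding h_def by (rule T_summable(1)[OF u f])
      have has: "(\<lambda>j. \<bar>h j\<bar>) summable_on \<Gamma>" unfolding h_def by (rule T_summable(2)[OF u f])
      have hsF: "h summable_on (\<Gamma> - F)" by (rule summable_on_subset_banach[OF hs]) auto
      have hasF: "(\<lambda>j. \<bar>h j\<bar>) summable_on (\<Gamma> - F)" by (rule summable_on_subset_banach[OF has]) auto
      have L0: "0 \<le> lipconst UNIV f" by (rule Lip0_lipconst_nonneg[OF f])
      have "infsum h \<Gamma> = infsum h (F \<union> (\<Gamma> - F))" using F by (simp add: Un_absorb1)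
      also have "\<dots> = infsum h F + infsum h (\<Gamma> - F)"
        by (rule infsum_Un_disjoint) (use F hsF in auto)
      finally have hsplit: "infsum h \<Gamma> = sum h F + infsum h (\<Gamma> - F)" using F by simp
      have eq: "Tm u f - m f = infsum h (\<Gamma> - F) + (\<Sum>j\<in>F. h j - mj j (R j f))"
      proof -
        have Th: "Tm u f = infsum h \<Gamma>" unfolding Tm_def h_def using f by simp
        show ?thesis using Th hsplit mf[OF f] by (simp add: sum_subtractf)
      qed
      have b1: "\<bar>infsum h (\<Gamma> - F)\<bar> \<le> lipconst UNIV f * (\<epsilon> / 3)"
      proof -
        have "\<bar>infsum h (\<Gamma> - F)\<bar> = norm (infsum h (\<Gamma> - F))" by simp
        also have "\<dots> \<le> infsum (\<lambda>j. norm (h j)) (\<Gamma> - F)"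
          by (rule norm_infsum_bound) (use hasF in simp)
        also have "\<dots> \<le> infsum (\<lambda>j. lipconst UNIV f * d j) (\<Gamma> - F)"
          by (rule infsum_mono) (use hasF summable_on_cmult_right[OF dsF] T_term_bound[OF u f]
              in \<open>auto simp: h_def d_def\<close>)
        also have "\<dots> = lipconst UNIV f * infsum d (\<Gamma> - F)" by (rule infsum_cmult_right')
        also have "\<dots> \<le> lipconst UNIV f * (\<epsilon> / 3)" by (rule mult_left_mono[OF tail L0])
        finally show ?thesis .
      qed
      have b2: "\<bar>\<Sum>j\<in>F. h j - mj j (R j f)\<bar> \<le> lipconst UNIV f * (\<epsilon> / 3)"
      proof -
        have "\<bar>\<Sum>j\<in>F. h j - mj j (R j f)\<bar> \<le> (\<Sum>j\<in>F. \<bar>h j - mj j (R j f)\<bar>)" by (rule sum_abs)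
        also have "\<dots> \<le> (\<Sum>j\<in>F. \<eta> * lipconst UNIV f)"
        proof (rule sum_mono)
          fix j assume j: "j \<in> F"
          then have jG: "j \<in> \<Gamma>" using F by auto
          have dd: "(\<lambda>g. u j g - mj j g) \<in> Lip0_dual (Y j) 0"
            by (rule dual_diff[OF U_dual[OF u jG] mjd[OF j]])
          have "\<bar>h j - mj j (R j f)\<bar> \<le> dualnorm (Y j) 0 (\<lambda>g. u j g - mj j g) * lipconst (Y j) (R j f)"
            unfolding h_def using dual_bound[OF dd R_Lip0(1)[OF jG f]] by simp
          also have "\<dots> \<le> \<eta> * lipconst UNIV f"
          proof (rule mult_mono)
            show "dualnorm (Y j) 0 (\<lambda>g. u j g - mj j g) \<le> \<eta>" using Sa[OF j] unfolding mj_def by simp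
            show "lipconst (Y j) (R j f) \<le> lipconst UNIV f" by (rule R_Lip0(2)[OF jG f])
            show "0 \<le> \<eta>" using \<eta> by simp
            show "0 \<le> lipconst (Y j) (R j f)" by (rule Lip0_lipconst_nonneg[OF R_Lip0(1)[OF jG f]])
          qed
          finally show "\<bar>h j - mj j (R j f)\<bar> \<le> \<eta> * lipconst UNIV f" .
        qed
        also have "\<dots> = (real (card F) * \<eta>) * lipconst UNIV f" by simp
        also have "\<dots> \<le> (\<epsilon> / 3) * lipconst UNIV f" by (rule mult_right_mono[OF c\<eta> L0])
        finally show ?thesis by (simp add: mult.commute)
      qed
      have "\<bar>Tm u f - m f\<bar> \<le> \<bar>infsum h (\<Gamma> - F)\<bar> + \<bar>\<Sum>j\<in>F. h j - mj j (R j f)\<bar>"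
        unfolding eq by (rule abs_triangle_ineq)
      also have "\<dots> \<le> lipconst UNIV f * (\<epsilon> / 3) + lipconst UNIV f * (\<epsilon> / 3)" by (rule add_mono[OF b1 b2])
      also have "\<dots> = (2 * \<epsilon> / 3) * lipconst UNIV f" by (simp add: field_simps)
      finally show ?thesis .
    qed
    have "dualnorm UNIV 0 (\<lambda>f. Tm u f - m f) \<le> 2 * \<epsilon> / 3"
      by (rule dualnorm_le) (use bound e in auto)
    also have "\<dots> < \<epsilon>" using e by simp
    finally show ?thesis using mm by blast
  qed
  then show ?thesis unfolding free_space_def using Td by blast
qed

end

theorem mainTheorem8:
  fixes \<Gamma> :: "'j set" and Y :: "'j \<Rightarrow> 'a::banach set" and P :: "'j \<Rightarrow> 'a \<Rightarrow> 'a"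
  assumes closed_sub: "\<And>j. j \<in> \<Gamma> \<Longrightarrow> closed (Y j) \<and> subspace (Y j)"
    and bl: "\<And>j. j \<in> \<Gamma> \<Longrightarrow> bounded_linear (P j)"
    and proj: "\<And>j x. j \<in> \<Gamma> \<Longrightarrow> P j (P j x) = P j x"
    and range: "\<And>j. j \<in> \<Gamma> \<Longrightarrow> range (P j) = Y j"
    and orth: "\<And>i j x. i \<in> \<Gamma> \<Longrightarrow> j \<in> \<Gamma> \<Longrightarrow> i \<noteq> j \<Longrightarrow> P j (P i x) = 0"
    and c0: "\<And>x \<epsilon>. \<epsilon> > 0 \<Longrightarrow> finite {j \<in> \<Gamma>. \<epsilon> \<le> norm (P j x)}"
    and bdd: "\<exists>C. \<forall>x. \<forall>j\<in>\<Gamma>. norm (P j x) \<le> C * norm x"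
    and inj: "\<And>x. (\<forall>j\<in>\<Gamma>. P j x = 0) \<Longrightarrow> x = 0"
  shows "compl_embeds (l1_free_sum \<Gamma> Y) (l1_norm \<Gamma> Y) ladd lscale
           (free_space (UNIV::'a set) 0) (dualnorm UNIV 0) fadd fscale"
proof -
  interpret S: setting \<Gamma> Y P
    by (rule setting.intro[OF closed_sub bl proj range orth bdd inj])
  have K1: "1 \<le> S.K" by (rule S.K1)
  have lower: "(1 / (8 * S.K)) * l1_norm \<Gamma> Y u \<le> dualnorm UNIV 0 (S.Tm u)"
    if u: "u \<in> l1_free_sum \<Gamma> Y" for u
  proof -
    have "l1_norm \<Gamma> Y u = l1_norm \<Gamma> Y (S.Qm (S.Tm u))" using S.QT[OF u] by simp
    also have "\<dots> \<le> 8 * S.K * dualnorm UNIV 0 (S.Tm u)" by (rule S.Qm_norm[OF S.T_free[OF u]])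
    finally show ?thesis using K1 by (simp add: field_simps)
  qed
  show ?thesis unfolding compl_embeds_def
  proof (intro exI[of _ S.Tm] exI[of _ "\<lambda>v. S.Tm (S.Qm v)"] conjI ballI allI)
    show "\<And>u. u \<in> l1_free_sum \<Gamma> Y \<Longrightarrow> S.Tm u \<in> free_space UNIV 0" by (rule S.T_free)
    show "\<And>u u'. u \<in> l1_free_sum \<Gamma> Y \<Longrightarrow> u' \<in> l1_free_sum \<Gamma> Y \<Longrightarrow>
            S.Tm (ladd u u') = fadd (S.Tm u) (S.Tm u')" by (rule S.T_add)
    show "\<And>c u. u \<in> l1_free_sum \<Gamma> Y \<Longrightarrow> S.Tm (lscale c u) = fscale c (S.Tm u)" by (rule S.T_scale)
    show "\<exists>c>0. \<exists>C. \<forall>u\<in>l1_free_sum \<Gamma> Y. c * l1_norm \<Gamma> Y u \<le> dualnorm UNIV 0 (S.Tm u) \<and>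
            dualnorm UNIV 0 (S.Tm u) \<le> C * l1_norm \<Gamma> Y u"
      using lower S.T_norm K1 by (intro exI[of _ "1 / (8 * S.K)"] conjI exI[of _ 1]) auto
    show "\<And>v. v \<in> free_space UNIV 0 \<Longrightarrow> S.Tm (S.Qm v) \<in> S.Tm ` l1_free_sum \<Gamma> Y"
      using S.Qm_U by blast
    show "\<And>v v'. v \<in> free_space UNIV 0 \<Longrightarrow> v' \<in> free_space UNIV 0 \<Longrightarrow>
            S.Tm (S.Qm (fadd v v')) = fadd (S.Tm (S.Qm v)) (S.Tm (S.Qm v'))"
      using S.Qm_add S.T_add S.Qm_U by metis
    show "\<And>c v. v \<in> free_space UNIV 0 \<Longrightarrow> S.Tm (S.Qm (fscale c v)) = fscale c (S.Tm (S.Qm v))"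
      using S.Qm_scale S.T_scale by metis
    show "\<exists>C. \<forall>v\<in>free_space UNIV 0. dualnorm UNIV 0 (S.Tm (S.Qm v)) \<le> C * dualnorm UNIV 0 v"
    proof (intro exI[of _ "8 * S.K"] ballI)
      fix v :: "('a \<Rightarrow> real) \<Rightarrow> real" assume v: "v \<in> free_space UNIV 0"
      show "dualnorm UNIV 0 (S.Tm (S.Qm v)) \<le> 8 * S.K * dualnorm UNIV 0 v"
        using S.T_norm[OF S.Qm_U[OF v]] S.Qm_norm[OF v] by linarith
    qed
    show "\<And>u. u \<in> l1_free_sum \<Gamma> Y \<Longrightarrow> S.Tm (S.Qm (S.Tm u)) = S.Tm u" using S.QT by simp
  qed
qed

end
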